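(* For any $d_x\in\mathbb N$ and any $\alpha\in(0,0.5)$, there exists a $\textsc{ReLU}$ network $f:\mathbb R^{d_x}\rightarrow\mathbb R^{d_x}$ of width $d_x+1$ such that $f(x)=(1,\dots,1)$ for all $x\in\mathbb R^{d_x}\setminus[0,1]^{d_x}$, $f(x)=x$ for all $x\in[\alpha,1-\alpha]^{d_x}$, and $f(\mathbb R^{d_x})\subset[0,1]^{d_x}$.
   Context: A $\textsc{ReLU}$ network is $t_L\circ\sigma_{L-1}\circ\cdots\circ\sigma_1\circ t_1$ with affine $t_\ell:\mathbb R^{d_{\ell-1}}\to\mathbb R^{d_\ell}$ and coordinatewise $\textsc{ReLU}$ $\sigma_\ell(x)=\max\{x,0\}$; its width is $\max\{d_1,\dots,d_{L-1}\}$. *)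

theory Defs
  imports Complex_Main
begin

text \<open>Vectors in R^n are real lists of length n. An affine layer R^m -> R^n is a pair
(W, b) of an n-by-m matrix W (list of n rows, each of length m) and a bias b of length n.\<close>

type_synonym layer = "real list list \<times> real list"

definition affine :: "layer \<Rightarrow> real list \<Rightarrow> real list" where
  "affine l x = map2 (\<lambda>row bi. sum_list (map2 (*) row x) + bi) (fst l) (snd l)"

definition layer_ok :: "nat \<Rightarrow> nat \<Rightarrow> layer \<Rightarrow> bool" where
  "layer_ok m n l \<longleftrightarrow> length (fst l) = n \<and> length (snd l) = n \<and>
     (\<forall>row \<in> set (fst l). length row = m)"

definition relu_vec :: "real list \<Rightarrow> real list" where
  "relu_vec x = map (\<lambda>z. max z 0) x"

fun eval_net :: "layer list \<Rightarrow> real list \<Rightarrow> real list" where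
  "eval_net [] x = x"
| "eval_net [l] x = affine l x"
| "eval_net (l # ls) x = eval_net ls (relu_vec (affine l x))"

definition relu_net :: "nat list \<Rightarrow> layer list \<Rightarrow> bool" where
  "relu_net ds ls \<longleftrightarrow> ls \<noteq> [] \<and> length ds = length ls + 1 \<and>
     (\<forall>i < length ls. layer_ok (ds ! i) (ds ! Suc i) (ls ! i))"

text \<open>Width = max {d_1, ..., d_{L-1}} (0 if there are no hidden layers).\<close>
definition net_width :: "nat list \<Rightarrow> nat" where
  "net_width ds = Max (insert 0 (set (butlast (tl ds))))"

definition cube :: "nat \<Rightarrow> real \<Rightarrow> real \<Rightarrow> real list set" where
  "cube n a b = {x. length x = n \<and> (\<forall>i < n. a \<le> x ! i \<and> x ! i \<le> b)}"

end

theory Submission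
  imports Defs
begin

definition dl :: "nat \<Rightarrow> nat \<Rightarrow> real" where "dl a j = (if j = a then 1 else 0)"

definition lay2 :: "nat \<Rightarrow> nat \<Rightarrow> (nat\<Rightarrow>nat) \<Rightarrow> (nat\<Rightarrow>real) \<Rightarrow> (nat\<Rightarrow>nat) \<Rightarrow> (nat\<Rightarrow>real) \<Rightarrow> (nat\<Rightarrow>real) \<Rightarrow> layer" where
 "lay2 m n a c1 b c2 bias = (map (\<lambda>k. map (\<lambda>j. c1 k * dl (a k) j + c2 k * dl (b k) j) [0..<m]) [0..<n], map bias [0..<n])"

lemma sum_dl: "(\<Sum>j<m. dl a j * v!j) = (if a < m then v!a else 0)"
proof -
  have "(\<Sum>j<m. dl a j * v!j) = (\<Sum>j<m. if j = a then v!a else 0)"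
    by (rule sum.cong) (auto simp: dl_def)
  then show ?thesis by simp
qed

lemma sumlist_map2: "length v = m \<Longrightarrow> sum_list (map2 (*) (map f [0..<m]) v) = (\<Sum>j<m. f j * v!j)"
proof -
  assume "length v = m"
  then have "map2 (*) (map f [0..<m]) v = map (\<lambda>j. f j * v!j) [0..<m]"
    by (intro nth_equalityI) auto
  then show ?thesis by (simp add: sum_list_sum_nth atLeast0LessThan)
qed

lemma layer_ok_lay2: "layer_ok m n (lay2 m n a c1 b c2 bias)"
  by (auto simp: layer_ok_def lay2_def)

lemma affine_lay2_len: "length (affine (lay2 m n a c1 b c2 bias) v) = n"
  by (simp add: affine_def lay2_def)

lemma affine_lay2_nth: "length v = m \<Longrightarrow> k < n \<Longrightarrow> affine (lay2 m n a c1 b c2 bias) v ! k =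
   c1 k * (if a k < m then v!(a k) else 0) + c2 k * (if b k < m then v!(b k) else 0) + bias k"
proof -
  assume h: "length v = m" "k < n"
  have "affine (lay2 m n a c1 b c2 bias) v ! k = (\<Sum>j<m. (c1 k * dl (a k) j + c2 k * dl (b k) j) * v!j) + bias k"
    using h by (simp add: affine_def lay2_def sumlist_map2)
  also have "(\<Sum>j<m. (c1 k * dl (a k) j + c2 k * dl (b k) j) * v!j)
     = c1 k * (\<Sum>j<m. dl (a k) j * v!j) + c2 k * (\<Sum>j<m. dl (b k) j * v!j)"
    by (simp add: distrib_right sum.distrib sum_distrib_left mult.assoc)
  finally show ?thesis by (simp add: sum_dl)
qed

definition R :: "layer \<Rightarrow> real list \<Rightarrow> real list" where "R l v = relu_vec (affine l v)"

lemma R_len: "length (R (lay2 m n a c1 b c2 bias) v) = n"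
  by (simp add: R_def relu_vec_def affine_lay2_len)

lemma R_nth: "length v = m \<Longrightarrow> k < n \<Longrightarrow> R (lay2 m n a c1 b c2 bias) v ! k =
   max (c1 k * (if a k < m then v!(a k) else 0) + c2 k * (if b k < m then v!(b k) else 0) + bias k) 0"
  by (simp add: R_def relu_vec_def affine_lay2_nth affine_lay2_len)

fun hid :: "layer list \<Rightarrow> real list \<Rightarrow> real list" where
  "hid [] v = v"
| "hid (l # ls) v = hid ls (R l v)"

lemma hid_append: "hid (xs @ ys) v = hid ys (hid xs v)"
  by (induction xs arbitrary: v) auto

lemma eval_hid: "eval_net (ls @ [l]) x = affine l (hid ls x)"
proof (induction ls arbitrary: x)
  case Nil then show ?case by simp
next
  case (Cons a ls)
  have "eval_net (a # (ls @ [l])) x = eval_net (ls @ [l]) (R a x)"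
    by (cases "ls @ [l]") (auto simp: R_def)
  then show ?case using Cons by simp
qed

fun okc :: "nat list \<Rightarrow> layer list \<Rightarrow> bool" where
  "okc [m] [] = True"
| "okc (m # n # ds) (l # ls) = (layer_ok m n l \<and> okc (n # ds) ls)"
| "okc _ _ = False"

lemma okc_net: "okc ds ls \<Longrightarrow> length ds = length ls + 1 \<and> (\<forall>i < length ls. layer_ok (ds ! i) (ds ! Suc i) (ls ! i))"
proof (induction ds ls rule: okc.induct)
  case (2 m n ds l ls)
  then show ?case by (auto simp: less_Suc_eq_0_disj)
qed auto

lemma okc_rep: "(\<forall>l\<in>set ls. layer_ok n n l) \<Longrightarrow> layer_ok n m lz \<Longrightarrow> okc (n # replicate (length ls) n @ [m]) (ls @ [lz])"
proof (induction ls)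
  case (Cons a ls)
  have e: "n # replicate (length (a#ls)) n @ [m] = n # n # (replicate (length ls) n @ [m])" by simp
  show ?case unfolding e append_Cons okc.simps(2) using Cons by simp
qed auto

definition LA :: "nat \<Rightarrow> real \<Rightarrow> nat \<Rightarrow> layer" where
 "LA d \<alpha> i = lay2 (d+1) (d+1) (\<lambda>k. if k = d then d else k) (\<lambda>k. if k = d then 1/\<alpha> else if k = i then -1 else 1)
     (\<lambda>k. i) (\<lambda>k. if k = d then 1/\<alpha> else 0) (\<lambda>k. if k = d then -(1-\<alpha>)/\<alpha> else if k = i then 1 else 0)"
definition LB :: "nat \<Rightarrow> real \<Rightarrow> nat \<Rightarrow> layer" where
 "LB d \<alpha> i = lay2 (d+1) (d+1) (\<lambda>k. if k = d then d else k) (\<lambda>k. if k = d then 1/\<alpha> else 1)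
     (\<lambda>k. i) (\<lambda>k. if k = d then 1/\<alpha> else 0) (\<lambda>k. if k = d then -(1-\<alpha>)/\<alpha> else 0)"
definition L0 :: "nat \<Rightarrow> layer" where
 "L0 d = lay2 d (d+1) (\<lambda>k. k) (\<lambda>k. 1) (\<lambda>k. k) (\<lambda>k. 0) (\<lambda>k. 0)"
definition LZ :: "nat \<Rightarrow> layer" where
 "LZ d = lay2 (d+1) (d+1) (\<lambda>k. k) (\<lambda>k. if k = d then 0 else 1) (\<lambda>k. d) (\<lambda>k. if k = d then 0 else -1) (\<lambda>k. 0)"
definition LO :: "nat \<Rightarrow> layer" where
 "LO d = lay2 (d+1) d (\<lambda>k. k) (\<lambda>k. -1) (\<lambda>k. k) (\<lambda>k. 0) (\<lambda>k. 1)"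

definition steps :: "nat \<Rightarrow> real \<Rightarrow> nat \<Rightarrow> layer list" where
 "steps d \<alpha> p = concat (map (\<lambda>i. [LA d \<alpha> i, LB d \<alpha> i]) [0..<p])"

definition Inv :: "nat \<Rightarrow> real \<Rightarrow> real list \<Rightarrow> nat \<Rightarrow> real list \<Rightarrow> bool" where
 "Inv d \<alpha> x p v \<longleftrightarrow> length v = d+1 \<and>
    (\<forall>k<d. v!k = (if k < p then max (1 - max (x!k) 0) 0 else max (x!k) 0)) \<and> 0 \<le> v!d \<and>
    ((\<forall>k<p. \<alpha> \<le> x!k \<and> x!k \<le> 1-\<alpha>) \<longrightarrow> v!d = 0) \<and>
    ((\<exists>k<p. x!k < 0 \<or> 1 < x!k) \<longrightarrow> 1 \<le> v!d)"

lemma Inv0: "length x = d \<Longrightarrow> Inv d \<alpha> x 0 (R (L0 d) x)"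
  by (simp add: Inv_def L0_def R_len R_nth)

lemma Inv_step:
  assumes a: "0 < \<alpha>" "\<alpha> < 1/2" and I: "Inv d \<alpha> x p v" and p: "p < d"
  shows "Inv d \<alpha> x (Suc p) (R (LB d \<alpha> p) (R (LA d \<alpha> p) v))"
proof -
  define v1 where "v1 = R (LA d \<alpha> p) v"
  define v2 where "v2 = R (LB d \<alpha> p) v1"
  have lv: "length v = d+1" using I by (simp add: Inv_def)
  have l1: "length v1 = d+1" by (simp add: v1_def LA_def R_len)
  have l2: "length v2 = d+1" by (simp add: v2_def LB_def R_len)
  have v1d: "v1!d = max (1/\<alpha> * v!d + 1/\<alpha> * v!p + -(1-\<alpha>)/\<alpha>) 0"
    using lv p by (simp add: v1_def LA_def R_nth)
  have v1p: "v1!p = max (1 - v!p) 0"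
    using lv p by (simp add: v1_def LA_def R_nth)
  have v1k: "v1!k = max (v!k) 0" if "k < d" "k \<noteq> p" for k
    using lv p that by (simp add: v1_def LA_def R_nth)
  have v2d: "v2!d = max (1/\<alpha> * v1!d + 1/\<alpha> * v1!p + -(1-\<alpha>)/\<alpha>) 0"
    using l1 p by (simp add: v2_def LB_def R_nth)
  have v2k: "v2!k = max (v1!k) 0" if "k < d" for k
    using l1 p that by (simp add: v2_def LB_def R_nth)
  have vk: "\<And>k. k<d \<Longrightarrow> v!k = (if k < p then max (1 - max (x!k) 0) 0 else max (x!k) 0)"
    and vd: "0 \<le> v!d" and P: "(\<forall>k<p. \<alpha> \<le> x!k \<and> x!k \<le> 1-\<alpha>) \<Longrightarrow> v!d = 0"
    and Q: "(\<exists>k<p. x!k < 0 \<or> 1 < x!k) \<Longrightarrow> 1 \<le> v!d" using I by (auto simp: Inv_def)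
  have vp: "v!p = max (x!p) 0" using vk p by simp
  have div1: "1 \<le> 1/\<alpha> * a + 1/\<alpha> * b + -(1-\<alpha>)/\<alpha>" if "a + b \<ge> 1" for a b
  proof -
    have "1/\<alpha> * a + 1/\<alpha> * b + -(1-\<alpha>)/\<alpha> = (a + b - 1 + \<alpha>)/\<alpha>" using a by (simp add: field_simps)
    also have "\<dots> \<ge> 1" using that a by simp
    finally show ?thesis by simp
  qed
  have div0: "1/\<alpha> * a + 1/\<alpha> * b + -(1-\<alpha>)/\<alpha> \<le> 0" if "a + b \<le> 1 - \<alpha>" for a b
  proof -
    have "1/\<alpha> * a + 1/\<alpha> * b + -(1-\<alpha>)/\<alpha> = (a + b - (1 - \<alpha>))/\<alpha>" using a by (simp add: field_simps)
    also have "\<dots> \<le> 0" using that a by (simp add: divide_nonpos_pos)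
    finally show ?thesis .
  qed
  have c1: "\<forall>k<d. v2!k = (if k < Suc p then max (1 - max (x!k) 0) 0 else max (x!k) 0)"
  proof (intro allI impI)
    fix k assume k: "k < d"
    show "v2!k = (if k < Suc p then max (1 - max (x!k) 0) 0 else max (x!k) 0)"
    proof (cases "k = p")
      case True then show ?thesis using k v2k v1p vp by simp
    next
      case False then show ?thesis using k v2k v1k vk by auto
    qed
  qed
  have c2: "0 \<le> v2!d" using v2d by simp
  have c3: "v2!d = 0" if h: "\<forall>k<Suc p. \<alpha> \<le> x!k \<and> x!k \<le> 1-\<alpha>"
  proof -
    have "v!d = 0" using P h by auto
    moreover have xp: "\<alpha> \<le> x!p" "x!p \<le> 1-\<alpha>" using h by auto
    ultimately have "v1!d = 0" using v1d vp a div0[of "v!d" "v!p"] by auto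
    moreover have "v1!p = 1 - x!p" using v1p vp xp a by auto
    ultimately show ?thesis using v2d xp div0[of "v1!d" "v1!p"] by auto
  qed
  have c4: "1 \<le> v2!d" if h: "\<exists>k<Suc p. x!k < 0 \<or> 1 < x!k"
  proof -
    have n1: "0 \<le> v1!p" using v1p by simp
    have "1 \<le> v1!d \<or> x!p < 0"
    proof (cases "\<exists>k<p. x!k < 0 \<or> 1 < x!k")
      case True
      then have "1 \<le> v!d" using Q by auto
      then show ?thesis using v1d vp div1[of "v!d" "v!p"] by auto
    next
      case False
      then have "x!p < 0 \<or> 1 < x!p" using h less_Suc_eq by auto
      then show ?thesis using v1d vp vd div1[of "v!d" "v!p"] by auto
    qed
    then show ?thesis
    proof
      assume "1 \<le> v1!d" then show ?thesis using v2d n1 div1[of "v1!d" "v1!p"] by auto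
    next
      assume "x!p < 0" then have "v1!p = 1" using v1p vp by simp
      moreover have "0 \<le> v1!d" using v1d by simp
      ultimately show ?thesis using v2d div1[of "v1!d" "v1!p"] by auto
    qed
  qed
  show ?thesis unfolding v1_def[symmetric] v2_def[symmetric] Inv_def
    using l2 c1 c2 c3 c4 by blast
qed

lemma steps_Suc: "steps d \<alpha> (Suc p) = steps d \<alpha> p @ [LA d \<alpha> p, LB d \<alpha> p]"
  by (simp add: steps_def)

lemma steps_0: "steps d \<alpha> 0 = []"
  unfolding steps_def by simp

lemma steps_len: "length (steps d \<alpha> p) = 2 * p"
  by (induction p) (auto simp: steps_Suc steps_0)

lemma steps_ok: "\<forall>l \<in> set (steps d \<alpha> p). layer_ok (d+1) (d+1) l"
  by (induction p) (simp_all add: steps_0 steps_Suc LA_def LB_def layer_ok_lay2)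

lemma Inv_steps:
  assumes a: "0 < \<alpha>" "\<alpha> < 1/2" and x: "length x = d"
  shows "p \<le> d \<Longrightarrow> Inv d \<alpha> x p (hid (steps d \<alpha> p) (R (L0 d) x))"
proof (induction p)
  case 0 then show ?case using Inv0[OF x] by (simp add: steps_0)
next
  case (Suc p)
  then show ?case using Inv_step[OF a, of d x p] by (simp add: steps_Suc hid_append)
qed

theorem lemma12:
  fixes dx :: nat and \<alpha> :: real
  assumes "0 < \<alpha>" and "\<alpha> < 1/2"
  shows "\<exists>ds ls. relu_net ds ls \<and> hd ds = dx \<and> last ds = dx \<and> net_width ds = dx + 1 \<and>
     (\<forall>x. length x = dx \<and> x \<notin> cube dx 0 1 \<longrightarrow> eval_net ls x = replicate dx 1) \<and>
     (\<forall>x \<in> cube dx \<alpha> (1 - \<alpha>). eval_net ls x = x) \<and>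
     (\<forall>x. length x = dx \<longrightarrow> eval_net ls x \<in> cube dx 0 1)"
proof -
  define d where "d = dx"
  define rest where "rest = steps d \<alpha> d @ [LZ d]"
  define ds where "ds = d # (d+1) # replicate (length rest) (d+1) @ [d]"
  define ls where "ls = L0 d # rest @ [LO d]"
  have ok: "okc ds ls"
    unfolding ds_def ls_def okc.simps(2)
  proof
    show "layer_ok d (d+1) (L0 d)" by (simp add: L0_def layer_ok_lay2)
    show "okc ((d+1) # replicate (length rest) (d+1) @ [d]) (rest @ [LO d])"
      by (rule okc_rep) (simp_all add: rest_def steps_ok[simplified] LZ_def LO_def layer_ok_lay2)
  qed
  have rn: "relu_net ds ls" using okc_net[OF ok] by (simp add: relu_net_def ls_def)
  have w: "net_width ds = d + 1" by (simp add: net_width_def ds_def butlast_append set_replicate_conv_if)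
  have ev: "eval_net ls x = affine (LO d) (R (LZ d) (hid (steps d \<alpha> d) (R (L0 d) x)))" for x
  proof -
    have e: "ls = (L0 d # rest) @ [LO d]" by (simp add: ls_def)
    have "eval_net ls x = affine (LO d) (hid (L0 d # rest) x)" unfolding e by (rule eval_hid)
    then show ?thesis by (simp add: rest_def hid_append)
  qed
  have main: "length (eval_net ls x) = d \<and> (\<forall>k<d. eval_net ls x ! k = 1 - max (max (1 - max (x!k) 0) 0 - H!d) 0)
     \<and> Inv d \<alpha> x d H" if x: "length x = d" and Hd: "H = hid (steps d \<alpha> d) (R (L0 d) x)" for x H
  proof -
    have I: "Inv d \<alpha> x d H" using Inv_steps[OF assms x, of d] Hd by simp
    then have lH: "length H = d+1" and Hk: "\<And>k. k<d \<Longrightarrow> H!k = max (1 - max (x!k) 0) 0" by (auto simp: Inv_def)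
    have lz: "length (R (LZ d) H) = d+1" by (simp add: LZ_def R_len)
    have zk: "R (LZ d) H ! k = max (H!k - H!d) 0" if "k<d" for k using that lH by (simp add: LZ_def R_nth)
    have "length (eval_net ls x) = d" by (simp add: ev LO_def affine_lay2_len)
    moreover have "\<forall>k<d. eval_net ls x ! k = 1 - max (max (1 - max (x!k) 0) 0 - H!d) 0"
      using lz zk Hk by (simp add: ev Hd[symmetric] LO_def affine_lay2_nth)
    ultimately show ?thesis using I by simp
  qed
  show ?thesis
  proof (intro exI conjI)
    show "relu_net ds ls" by (rule rn)
    show "hd ds = dx" "last ds = dx" "net_width ds = dx + 1" using w by (auto simp: ds_def d_def)
    show "\<forall>x. length x = dx \<and> x \<notin> cube dx 0 1 \<longrightarrow> eval_net ls x = replicate dx 1"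
    proof (intro allI impI)
      fix x assume h: "length x = dx \<and> x \<notin> cube dx 0 1"
      define H where "H = hid (steps d \<alpha> d) (R (L0 d) x)"
      have m: "length (eval_net ls x) = d \<and> (\<forall>k<d. eval_net ls x ! k = 1 - max (max (1 - max (x!k) 0) 0 - H!d) 0)
        \<and> Inv d \<alpha> x d H" using main h H_def d_def by blast
      have "\<exists>k<d. x!k < 0 \<or> 1 < x!k" using h by (auto simp: cube_def d_def not_le)
      then have "1 \<le> H!d" using m by (simp add: Inv_def)
      then show "eval_net ls x = replicate dx 1" using m
        by (intro nth_equalityI) (auto simp: d_def)
    qed
    show "\<forall>x \<in> cube dx \<alpha> (1 - \<alpha>). eval_net ls x = x"
    proof
      fix x assume h: "x \<in> cube dx \<alpha> (1 - \<alpha>)"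
      define H where "H = hid (steps d \<alpha> d) (R (L0 d) x)"
      have xl: "length x = d" and xr: "\<forall>k<d. \<alpha> \<le> x!k \<and> x!k \<le> 1-\<alpha>" using h by (auto simp: cube_def d_def)
      have m: "length (eval_net ls x) = d \<and> (\<forall>k<d. eval_net ls x ! k = 1 - max (max (1 - max (x!k) 0) 0 - H!d) 0)
        \<and> Inv d \<alpha> x d H" using main xl H_def by blast
      then have "H!d = 0" using xr by (simp add: Inv_def)
      then show "eval_net ls x = x" using m xl xr assms
        by (intro nth_equalityI) auto
    qed
    show "\<forall>x. length x = dx \<longrightarrow> eval_net ls x \<in> cube dx 0 1"
    proof (intro allI impI)
      fix x :: "real list" assume h: "length x = dx"
      define H where "H = hid (steps d \<alpha> d) (R (L0 d) x)"
      have m: "length (eval_net ls x) = d \<and> (\<forall>k<d. eval_net ls x ! k = 1 - max (max (1 - max (x!k) 0) 0 - H!d) 0)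
        \<and> Inv d \<alpha> x d H" using main h H_def d_def by blast
      then have "0 \<le> H!d" by (simp add: Inv_def)
      then show "eval_net ls x \<in> cube dx 0 1" using m
        by (auto simp: cube_def d_def)
    qed
  qed
qed

end
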